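(* Let ${\cal F}$ be a nonprincipal filter on $\omega$, and for sequences $\hat s=\{s_n\}$ with $s_n\in(0,\tfrac12]$ let $\mu_{\hat s}$ denote the corresponding product measure on $2^\omega$. (1) If $\hat p,\hat q$ are such sequences with $p_n\le q_n$ for all but finitely many $n$, and $\mu_{\hat q}({\cal F})=0$, then $\mu_{\hat p}({\cal F})=0$. (2) If ${\cal F}$ is nonmeasurable with respect to both $\mu_{\hat p}$ and $\mu_{\hat q}$, and $r_n=\min\{p_n,q_n\}$ for $n\in\omega$, then ${\cal F}$ is $\mu_{\hat r}$-nonmeasurable.
   Context: Subsets of $\omega$ are identified with their characteristic functions, so filters on $\omega$ are subsets of $2^\omega$. For $\hat s=\{s_n:n\in\omega\}$ with $s_n\in(0,\tfrac12]$, $\mu_{\hat s}$ is the product measure on $2^\omega$ with $\mu_{\hat s}(\{x:x(n)=1\})=s_n$ and $\mu_{\hat s}(\{x:x(n)=0\})=1-s_n$. *)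

theory Defs
  imports "HOL-Probability.Probability"
begin

text \<open>Subsets of omega are identified with their characteristic functions
  \<open>nat \<Rightarrow> bool\<close>; the Cantor space \<open>2^\<omega>\<close> is the type \<open>nat \<Rightarrow> bool\<close>.\<close>

definition prod_meas :: "(nat \<Rightarrow> real) \<Rightarrow> (nat \<Rightarrow> bool) measure" where
  "prod_meas s = PiM UNIV (\<lambda>n. measure_pmf (bernoulli_pmf (s n)))"

text \<open>A filter on omega viewed as a subset of \<open>2^\<omega>\<close>: the set of characteristic
  functions of its members.\<close>
definition filter_set :: "nat filter \<Rightarrow> (nat \<Rightarrow> bool) set" where
  "filter_set F = {x. eventually x F}"

definition admissible_seq :: "(nat \<Rightarrow> real) \<Rightarrow> bool" where
  "admissible_seq s \<longleftrightarrow> (\<forall>n. 0 < s n \<and> s n \<le> 1/2)"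

end

theory Submission
  imports Defs
begin


definition bm :: "real \<Rightarrow> bool set \<Rightarrow> real" where
  "bm p A = (if True \<in> A then p else 0) + (if False \<in> A then 1 - p else 0)"

lemma bm_nonneg: "0 \<le> p \<Longrightarrow> p \<le> 1 \<Longrightarrow> 0 \<le> bm p A"
  by (simp add: bm_def)

lemma bool_set_cases: "(A::bool set) = {} \<or> A = {True} \<or> A = {False} \<or> A = UNIV"
proof -
  have "A = {x. x \<and> True \<in> A} \<union> {x. \<not> x \<and> False \<in> A}"
    by (auto, (metis (full_types))+)
  then show ?thesis by (cases "True \<in> A"; cases "False \<in> A") auto
qed

lemma bern_emeasure:
  assumes "0 \<le> p" "p \<le> 1"
  shows "emeasure (measure_pmf (bernoulli_pmf p)) A = ennreal (bm p A)"
  using bool_set_cases[of A]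
proof (elim disjE)
  assume "A = UNIV"
  then show ?thesis using assms
    by (simp add: bm_def measure_pmf.emeasure_space_1[simplified])
qed (use assms in \<open>simp_all add: bm_def emeasure_measure_pmf_finite\<close>)

definition fac :: "real \<Rightarrow> real \<Rightarrow> real \<Rightarrow> (bool \<Rightarrow> bool \<Rightarrow> bool) \<Rightarrow> bool" where
  "fac a t b \<phi> \<longleftrightarrow> (\<forall>A. (\<integral>\<^sup>+ \<alpha>. emeasure (measure_pmf (bernoulli_pmf t)) {\<beta>. \<phi> \<alpha> \<beta> \<in> A} \<partial>measure_pmf (bernoulli_pmf a))
      = emeasure (measure_pmf (bernoulli_pmf b)) A)"

lemma facI:
  assumes ab: "0 \<le> a" "a \<le> 1" "0 \<le> t" "t \<le> 1" "0 \<le> b" "b \<le> 1"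
  and eq: "\<And>A. bm t {\<beta>. \<phi> True \<beta> \<in> A} * a + bm t {\<beta>. \<phi> False \<beta> \<in> A} * (1 - a) = bm b A"
  shows "fac a t b \<phi>"
  unfolding fac_def
proof
  fix A
  have n1: "0 \<le> bm t {\<beta>. \<phi> True \<beta> \<in> A} * a" "0 \<le> bm t {\<beta>. \<phi> False \<beta> \<in> A} * (1 - a)"
    using ab bm_nonneg[of t] by auto
  have "(\<integral>\<^sup>+ \<alpha>. emeasure (measure_pmf (bernoulli_pmf t)) {\<beta>. \<phi> \<alpha> \<beta> \<in> A} \<partial>measure_pmf (bernoulli_pmf a))
     = (\<integral>\<^sup>+ \<alpha>. ennreal (bm t {\<beta>. \<phi> \<alpha> \<beta> \<in> A}) \<partial>measure_pmf (bernoulli_pmf a))"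
    using ab by (simp add: bern_emeasure)
  also have "\<dots> = ennreal (bm t {\<beta>. \<phi> True \<beta> \<in> A}) * ennreal a + ennreal (bm t {\<beta>. \<phi> False \<beta> \<in> A}) * ennreal (1 - a)"
    using ab by (subst nn_integral_bernoulli_pmf) auto
  also have "\<dots> = ennreal (bm t {\<beta>. \<phi> True \<beta> \<in> A} * a + bm t {\<beta>. \<phi> False \<beta> \<in> A} * (1 - a))"
    using ab bm_nonneg[of t] n1 by (simp add: ennreal_mult' ennreal_plus)
  also have "\<dots> = emeasure (measure_pmf (bernoulli_pmf b)) A"
    using ab by (simp add: eq bern_emeasure)
  finally show "(\<integral>\<^sup>+ \<alpha>. emeasure (measure_pmf (bernoulli_pmf t)) {\<beta>. \<phi> \<alpha> \<beta> \<in> A} \<partial>measure_pmf (bernoulli_pmf a))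
     = emeasure (measure_pmf (bernoulli_pmf b)) A" .
qed

lemma fac_snd: "0 \<le> a \<Longrightarrow> a \<le> 1 \<Longrightarrow> 0 \<le> t \<Longrightarrow> t \<le> 1 \<Longrightarrow> fac a t t (\<lambda>\<alpha> \<beta>. \<beta>)"
  by (rule facI) (auto simp: bm_def algebra_simps)

lemma fac_not: "0 \<le> a \<Longrightarrow> a \<le> 1 \<Longrightarrow> 0 \<le> t \<Longrightarrow> t \<le> 1 \<Longrightarrow> fac a t (1 - a) (\<lambda>\<alpha> \<beta>. \<not> \<alpha>)"
  by (rule facI) (auto simp: bm_def algebra_simps)

lemma fac_or: assumes "0 \<le> a" "a \<le> 1" "0 \<le> t" "t \<le> 1" shows "fac a t (a + t - a * t) (\<lambda>\<alpha> \<beta>. \<alpha> \<or> \<beta>)"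
proof -
  have e: "a + t - a * t = 1 - (1 - a) * (1 - t)" by (simp add: algebra_simps)
  have m1: "0 \<le> (1 - a) * (1 - t)" "(1 - a) * (1 - t) \<le> 1" 
    using assms by (intro mult_nonneg_nonneg; simp) (intro mult_le_one; simp add: assms)
  have h: "0 \<le> a + t - a * t" "a + t - a * t \<le> 1" unfolding e using m1 by linarith+
  show ?thesis
  proof (rule facI)
    fix A :: "bool set"
    show "bm t {\<beta>. (True \<or> \<beta>) \<in> A} * a + bm t {\<beta>. (False \<or> \<beta>) \<in> A} * (1 - a) = bm (a + t - a * t) A"
      using bool_set_cases[of A] by (elim disjE) (simp_all add: bm_def algebra_simps)
  qed (use assms h in auto)
qed


lemma space_pm[simp]: "space (prod_meas s) = UNIV"
  by (auto simp: prod_meas_def space_PiM PiE_def extensional_def)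

lemma prob_pm: "prob_space (prod_meas s)"
  unfolding prod_meas_def by (rule prob_space_PiM) (rule prob_space_measure_pmf)

lemma sets_pm: "sets (prod_meas s) = sets (PiM UNIV (\<lambda>_. count_space (UNIV::bool set)))"
  unfolding prod_meas_def by (rule sets_PiM_cong) auto

lemma meas_comp[measurable]: "(\<lambda>x. x i) \<in> measurable (prod_meas s) (count_space UNIV)"
  unfolding measurable_cong_sets[OF sets_pm refl] by measurable

lemma meas_into:
  assumes "\<And>i. (\<lambda>x. f x i) \<in> measurable N (count_space UNIV)"
  shows "f \<in> measurable N (prod_meas s)"
  unfolding measurable_cong_sets[OF refl sets_pm]
  by (rule measurable_PiM_single') (use assms in auto)

lemma NP:
  fixes M :: "nat \<Rightarrow> 'a measure"
  assumes P: "\<And>i. prob_space (M i)" and J: "finite J"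
    and g: "\<And>i. i \<in> J \<Longrightarrow> g i \<in> borel_measurable (M i)"
  shows "(\<integral>\<^sup>+x. (\<Prod>i\<in>J. g i (x i)) \<partial>PiM UNIV M) = (\<Prod>i\<in>J. \<integral>\<^sup>+y. g i y \<partial>M i)"
proof -
  interpret M: prob_space "M i" for i by (rule P)
  interpret product_prob_space M UNIV by unfold_locales
  have m1: "(\<lambda>x. restrict x J) \<in> measurable (PiM UNIV M) (PiM J M)"
    by (rule measurable_restrict_subset) simp
  have m2: "(\<lambda>y. \<Prod>i\<in>J. g i (y i)) \<in> borel_measurable (PiM J M)"
    using g by (intro borel_measurable_prod_ennreal
              measurable_comp[OF measurable_component_singleton, unfolded comp_def]) auto
  have "(\<integral>\<^sup>+x. (\<Prod>i\<in>J. g i (x i)) \<partial>PiM UNIV M)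
      = (\<integral>\<^sup>+x. (\<Prod>i\<in>J. g i (restrict x J i)) \<partial>PiM UNIV M)"
    by (intro nn_integral_cong prod.cong) auto
  also have "\<dots> = (\<integral>\<^sup>+y. (\<Prod>i\<in>J. g i (y i)) \<partial>distr (PiM UNIV M) (PiM J M) (\<lambda>x. restrict x J))"
    using nn_integral_distr[OF m1, of "\<lambda>y. \<Prod>i\<in>J. g i (y i)"] m2 by simp
  also have "\<dots> = (\<integral>\<^sup>+y. (\<Prod>i\<in>J. g i (y i)) \<partial>PiM J M)"
    using J by (simp add: distr_PiM_restrict_finite)
  also have "\<dots> = (\<Prod>i\<in>J. \<integral>\<^sup>+y. g i y \<partial>M i)"
    by (rule product_nn_integral_prod) (use J g in auto)
  finally show ?thesis .
qed



definition Phi :: "(nat \<Rightarrow> bool \<Rightarrow> bool \<Rightarrow> bool) \<Rightarrow> (nat \<Rightarrow> bool) \<times> (nat \<Rightarrow> bool) \<Rightarrow> nat \<Rightarrow> bool" where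
  "Phi \<phi> w = (\<lambda>n. \<phi> n (fst w n) (snd w n))"

lemma meas_Phi: "Phi \<phi> \<in> measurable (prod_meas a \<Otimes>\<^sub>M prod_meas t) (prod_meas b)"
proof (rule meas_into)
  fix i
  show "(\<lambda>x. Phi \<phi> x i) \<in> measurable (prod_meas a \<Otimes>\<^sub>M prod_meas t) (count_space UNIV)"
    unfolding Phi_def by measurable
qed

lemma distr_coupling:
  assumes fac: "\<And>n. fac (a n) (t n) (b n) (\<phi> n)"
  shows "distr (prod_meas a \<Otimes>\<^sub>M prod_meas t) (prod_meas b) (Phi \<phi>) = prod_meas b"
proof -
  let ?Mb = "\<lambda>n. measure_pmf (bernoulli_pmf (b n))"
  let ?Ma = "\<lambda>n. measure_pmf (bernoulli_pmf (a n))"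
  let ?Mt = "\<lambda>n. measure_pmf (bernoulli_pmf (t n))"
  interpret pt: prob_space "prod_meas t" by (rule prob_pm)
  interpret pb: prob_space "prod_meas b" by (rule prob_pm)
  show ?thesis
  proof (rule measure_eqI_PiM_infinite[where I=UNIV and M="?Mb"])
    show "sets (distr (prod_meas a \<Otimes>\<^sub>M prod_meas t) (prod_meas b) (Phi \<phi>)) = sets (PiM UNIV ?Mb)"
      by (simp add: prod_meas_def)
    show "sets (prod_meas b) = sets (PiM UNIV ?Mb)"
      by (simp add: prod_meas_def)
    show "finite_measure (distr (prod_meas a \<Otimes>\<^sub>M prod_meas t) (prod_meas b) (Phi \<phi>))"
    proof -
      have "prob_space (distr (prod_meas a \<Otimes>\<^sub>M prod_meas t) (prod_meas b) (Phi \<phi>))"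
        by (intro prob_space.prob_space_distr prob_space_pair prob_pm meas_Phi)
      then show ?thesis by (simp add: prob_space_def)
    qed
  next
    fix A J assume J: "finite J" "J \<subseteq> (UNIV::nat set)" and A: "\<And>i. i \<in> J \<Longrightarrow> A i \<in> sets (?Mb i)"
    let ?X = "prod_emb UNIV ?Mb J (Pi\<^sub>E J A)"
    have X: "?X \<in> sets (prod_meas b)"
      unfolding prod_meas_def using J A by (intro sets_PiM_I) auto
    have "emeasure (distr (prod_meas a \<Otimes>\<^sub>M prod_meas t) (prod_meas b) (Phi \<phi>)) ?X
        = emeasure (prod_meas a \<Otimes>\<^sub>M prod_meas t) (Phi \<phi> -` ?X \<inter> space (prod_meas a \<Otimes>\<^sub>M prod_meas t))"
      by (rule emeasure_distr[OF meas_Phi X])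
    also have "Phi \<phi> -` ?X \<inter> space (prod_meas a \<Otimes>\<^sub>M prod_meas t) = {w. \<forall>i\<in>J. \<phi> i (fst w i) (snd w i) \<in> A i}"
      by (auto simp: prod_emb_def Phi_def space_pair_measure)
    also have "emeasure (prod_meas a \<Otimes>\<^sub>M prod_meas t) {w. \<forall>i\<in>J. \<phi> i (fst w i) (snd w i) \<in> A i}
        = (\<integral>\<^sup>+x. emeasure (prod_meas t) (Pair x -` {w. \<forall>i\<in>J. \<phi> i (fst w i) (snd w i) \<in> A i}) \<partial>prod_meas a)"
    proof (rule pt.emeasure_pair_measure_alt)
      have "{w. \<forall>i\<in>J. \<phi> i (fst w i) (snd w i) \<in> A i} = Phi \<phi> -` ?X \<inter> space (prod_meas a \<Otimes>\<^sub>M prod_meas t)"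
        by (auto simp: prod_emb_def Phi_def space_pair_measure)
      also have "\<dots> \<in> sets (prod_meas a \<Otimes>\<^sub>M prod_meas t)"
        by (rule measurable_sets[OF meas_Phi X])
      finally show "{w. \<forall>i\<in>J. \<phi> i (fst w i) (snd w i) \<in> A i} \<in> sets (prod_meas a \<Otimes>\<^sub>M prod_meas t)" .
    qed
    also have "\<dots> = (\<integral>\<^sup>+x. (\<Prod>i\<in>J. emeasure (?Mt i) {\<beta>. \<phi> i (x i) \<beta> \<in> A i}) \<partial>prod_meas a)"
    proof (intro nn_integral_cong)
      fix x
      have "Pair x -` {w. \<forall>i\<in>J. \<phi> i (fst w i) (snd w i) \<in> A i} = prod_emb UNIV ?Mt J (Pi\<^sub>E J (\<lambda>i. {\<beta>. \<phi> i (x i) \<beta> \<in> A i}))"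
        by (auto simp: prod_emb_def)
      then show "emeasure (prod_meas t) (Pair x -` {w. \<forall>i\<in>J. \<phi> i (fst w i) (snd w i) \<in> A i})
          = (\<Prod>i\<in>J. emeasure (?Mt i) {\<beta>. \<phi> i (x i) \<beta> \<in> A i})"
        unfolding prod_meas_def using J
        by (simp only:) (rule emeasure_PiM_emb, auto intro: prob_space_measure_pmf)
    qed
    also have "\<dots> = (\<Prod>i\<in>J. \<integral>\<^sup>+\<alpha>. emeasure (?Mt i) {\<beta>. \<phi> i \<alpha> \<beta> \<in> A i} \<partial>?Ma i)"
      unfolding prod_meas_def using J
      by (intro NP) (auto intro: prob_space_measure_pmf)
    also have "\<dots> = (\<Prod>i\<in>J. emeasure (?Mb i) (A i))"
      using fac by (intro prod.cong refl) (simp add: fac_def)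
    also have "\<dots> = emeasure (prod_meas b) ?X"
      unfolding prod_meas_def
      by (rule sym, rule emeasure_PiM_emb) (use J in \<open>auto intro: prob_space_measure_pmf\<close>)
    finally show "emeasure (distr (prod_meas a \<Otimes>\<^sub>M prod_meas t) (prod_meas b) (Phi \<phi>)) ?X = emeasure (prod_meas b) ?X" .
  qed
qed



lemma core:
  assumes fac: "\<And>n. fac (a n) (t n) (b n) (\<phi> n)" and N: "N \<in> null_sets (prod_meas b)"
  shows "\<exists>N'\<in>null_sets (prod_meas a). \<forall>x. x \<notin> N' \<longrightarrow> Pair x -` (Phi \<phi> -` N) \<in> null_sets (prod_meas t)"
proof -
  interpret pt: prob_space "prod_meas t" by (rule prob_pm)
  let ?P = "prod_meas a \<Otimes>\<^sub>M prod_meas t"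
  define G where "G = Phi \<phi> -` N"
  have spP: "space ?P = UNIV" by (simp add: space_pair_measure)
  have G: "G \<in> sets ?P"
    using measurable_sets[OF meas_Phi[of \<phi> a t b], of N] N spP by (simp add: G_def null_setsD2)
  have "emeasure ?P G = emeasure (distr ?P (prod_meas b) (Phi \<phi>)) N"
    using emeasure_distr[OF meas_Phi[of \<phi> a t b], of N] N spP by (simp add: G_def null_setsD2)
  also have "\<dots> = 0" using N by (simp add: distr_coupling[OF fac] null_setsD1)
  finally have "emeasure ?P G = 0" .
  then have "(\<integral>\<^sup>+x. emeasure (prod_meas t) (Pair x -` G) \<partial>prod_meas a) = 0"
    using pt.emeasure_pair_measure_alt[OF G] by simp
  then have "AE x in prod_meas a. emeasure (prod_meas t) (Pair x -` G) = 0"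
    by (subst (asm) nn_integral_0_iff_AE) (use pt.measurable_emeasure_Pair[OF G] in auto)
  then obtain N' where N': "{x \<in> space (prod_meas a). \<not> emeasure (prod_meas t) (Pair x -` G) = 0} \<subseteq> N'"
    "N' \<in> null_sets (prod_meas a)"
    by (rule AE_E) (auto simp: null_sets_def)
  show ?thesis
  proof (intro bexI[OF _ N'(2)] allI impI)
    fix x assume "x \<notin> N'"
    then have "emeasure (prod_meas t) (Pair x -` G) = 0" using N'(1) by auto
    moreover have "Pair x -` G \<in> sets (prod_meas t)" using G by (rule sets_Pair1)
    ultimately show "Pair x -` (Phi \<phi> -` N) \<in> null_sets (prod_meas t)"
      by (simp add: G_def null_sets_def)
  qed
qed

lemma xfer:
  assumes fac: "\<And>n. fac (a n) (t n) (b n) (\<phi> n)"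
    and S: "S \<in> null_sets (completion (prod_meas b))"
    and inv: "\<And>x z. x \<in> S \<Longrightarrow> Phi \<phi> (x, z) \<in> S"
  shows "S \<in> null_sets (completion (prod_meas a))"
proof -
  interpret pt: prob_space "prod_meas t" by (rule prob_pm)
  obtain N where N: "N \<in> null_sets (prod_meas b)" "S \<subseteq> N"
    using S by (auto simp: null_sets_completion_iff2)
  obtain N' where N': "N' \<in> null_sets (prod_meas a)"
    "\<And>x. x \<notin> N' \<Longrightarrow> Pair x -` (Phi \<phi> -` N) \<in> null_sets (prod_meas t)"
    using core[OF fac N(1)] by blast
  have "S \<subseteq> N'"
  proof
    fix x assume x: "x \<in> S"
    show "x \<in> N'"
    proof (rule ccontr)
      assume "x \<notin> N'"
      then have nul: "Pair x -` (Phi \<phi> -` N) \<in> null_sets (prod_meas t)" by (rule N'(2))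
      have "Pair x -` (Phi \<phi> -` N) = UNIV" using inv[OF x] N(2) by auto
      with nul show False using pt.emeasure_space_1 by (simp add: null_sets_def)
    qed
  qed
  then show ?thesis using N'(1) by (auto simp: null_sets_completion_iff2)
qed

lemma xfer2:
  assumes fac: "\<And>n. fac (a n) (t n) (b n) (\<phi> n)"
    and S: "S \<in> null_sets (completion (prod_meas b))"
    and inv: "\<And>x z. x \<in> S' \<Longrightarrow> Phi \<phi> (x, z) \<in> S"
  shows "S' \<in> null_sets (completion (prod_meas a))"
proof -
  interpret pt: prob_space "prod_meas t" by (rule prob_pm)
  obtain N where N: "N \<in> null_sets (prod_meas b)" "S \<subseteq> N"
    using S by (auto simp: null_sets_completion_iff2)
  obtain N' where N': "N' \<in> null_sets (prod_meas a)"
    "\<And>x. x \<notin> N' \<Longrightarrow> Pair x -` (Phi \<phi> -` N) \<in> null_sets (prod_meas t)"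
    using core[OF fac N(1)] by blast
  have "S' \<subseteq> N'"
  proof
    fix x assume x: "x \<in> S'"
    show "x \<in> N'"
    proof (rule ccontr)
      assume "x \<notin> N'"
      then have nul: "Pair x -` (Phi \<phi> -` N) \<in> null_sets (prod_meas t)" by (rule N'(2))
      have "Pair x -` (Phi \<phi> -` N) = UNIV" using inv[OF x] N(2) by auto
      with nul show False using pt.emeasure_space_1 by (simp add: null_sets_def)
    qed
  qed
  then show ?thesis using N'(1) by (auto simp: null_sets_completion_iff2)
qed

lemma splitl:
  assumes fac: "\<And>n. fac (a n) (t n) (b n) (\<phi> n)"
    and S: "S \<in> null_sets (completion (prod_meas b))"
    and inv: "\<And>x z. x \<in> S1 \<Longrightarrow> z \<in> S2 \<Longrightarrow> Phi \<phi> (x, z) \<in> S"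
  shows "S1 \<in> null_sets (completion (prod_meas a)) \<or> S2 \<in> null_sets (completion (prod_meas t))"
proof -
  obtain N where N: "N \<in> null_sets (prod_meas b)" "S \<subseteq> N"
    using S by (auto simp: null_sets_completion_iff2)
  obtain N' where N': "N' \<in> null_sets (prod_meas a)"
    "\<And>x. x \<notin> N' \<Longrightarrow> Pair x -` (Phi \<phi> -` N) \<in> null_sets (prod_meas t)"
    using core[OF fac N(1)] by blast
  show ?thesis
  proof (cases "S1 \<subseteq> N'")
    case True
    then show ?thesis using N'(1) by (auto simp: null_sets_completion_iff2)
  next
    case False
    then obtain x where x: "x \<in> S1" "x \<notin> N'" by auto
    have "S2 \<subseteq> Pair x -` (Phi \<phi> -` N)" using inv[OF x(1)] N(2) by auto
    then show ?thesis using N'(2)[OF x(2)] by (auto simp: null_sets_completion_iff2)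
  qed
qed



lemma fac_or': "b = a + t - a * t \<Longrightarrow> 0 \<le> a \<Longrightarrow> a \<le> 1 \<Longrightarrow> 0 \<le> t \<Longrightarrow> t \<le> 1 \<Longrightarrow> fac a t b (\<lambda>\<alpha> \<beta>. \<alpha> \<or> \<beta>)"
  using fac_or by simp

lemma fac_snd': "b = t \<Longrightarrow> 0 \<le> a \<Longrightarrow> a \<le> 1 \<Longrightarrow> 0 \<le> t \<Longrightarrow> t \<le> 1 \<Longrightarrow> fac a t b (\<lambda>\<alpha> \<beta>. \<beta>)"
  using fac_snd by simp

lemma fs_up: "x \<in> filter_set F \<Longrightarrow> (\<And>n. x n \<Longrightarrow> y n) \<Longrightarrow> y \<in> filter_set F"
  unfolding filter_set_def by (auto elim: eventually_mono)

lemma fs_inter: "x \<in> filter_set F \<Longrightarrow> y \<in> filter_set F \<Longrightarrow> (\<lambda>n. x n \<and> y n) \<in> filter_set F"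
  unfolding filter_set_def by (auto intro: eventually_conj)

lemma fs_cof: "F \<le> cofinite \<Longrightarrow> finite {n. \<not> y n} \<Longrightarrow> y \<in> filter_set F"
  unfolding filter_set_def le_filter_def by (auto simp: eventually_cofinite)

lemma adm: assumes "admissible_seq p" shows "0 \<le> p n" "p n \<le> 1" "p n < 1" "0 < p n" "p n \<le> 1/2"
proof -
  have "0 < p n" "p n \<le> 1/2" using assms unfolding admissible_seq_def by auto
  then show "0 \<le> p n" "p n \<le> 1" "p n < 1" "0 < p n" "p n \<le> 1/2" by linarith+
qed

lemma part1:
  assumes nonprincipal: "F \<le> cofinite"
    and p: "admissible_seq p" and q: "admissible_seq q"
    and ev: "\<forall>\<^sub>F n in cofinite. p n \<le> q n"
    and nq: "filter_set F \<in> null_sets (completion (prod_meas q))"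
  shows "filter_set F \<in> null_sets (completion (prod_meas p))"
proof -
  define E where "E = {n. \<not> p n \<le> q n}"
  have finE: "finite E" using ev unfolding E_def by (simp add: eventually_cofinite)
  define t where "t n = (if n \<in> E then q n else (q n - p n) / (1 - p n))" for n
  define \<phi> where "\<phi> n = (if n \<in> E then (\<lambda>\<alpha> \<beta>. \<beta>) else (\<lambda>\<alpha> \<beta>. \<alpha> \<or> \<beta>))" for n
  have fac: "fac (p n) (t n) (q n) (\<phi> n)" for n
  proof (cases "n \<in> E")
    case True
    then show ?thesis unfolding \<phi>_def t_def
      using adm[OF p, of n] adm[OF q, of n] by (simp add: fac_snd)
  next
    case False
    then have le: "p n \<le> q n" by (simp add: E_def)
    have p1: "0 < 1 - p n" using adm[OF p, of n] by simp
    have t0: "0 \<le> t n" using False le p1 by (simp add: t_def)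
    have t1: "t n \<le> 1" using False p1 adm[OF q, of n] by (simp add: t_def divide_le_eq_1)
    have m: "t n * (1 - p n) = q n - p n" using False p1 by (simp add: t_def)
    then have m2: "t n - p n * t n = q n - p n" by (simp add: algebra_simps)
    have eq: "q n = p n + t n - p n * t n" using m2 by linarith
    show ?thesis unfolding \<phi>_def using False
      by simp (rule fac_or'[OF eq], use adm[OF p, of n] t0 t1 in auto)
  qed
  show ?thesis
  proof (rule xfer[OF fac nq])
    fix x z assume x: "x \<in> filter_set F"
    have "(\<lambda>n. n \<notin> E) \<in> filter_set F"
      by (rule fs_cof[OF nonprincipal]) (simp add: finE)
    then have "(\<lambda>n. x n \<and> n \<notin> E) \<in> filter_set F" by (rule fs_inter[OF x])
    then show "Phi \<phi> (x, z) \<in> filter_set F"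
      by (rule fs_up) (auto simp: Phi_def \<phi>_def)
  qed
qed

lemma part2:
  assumes p: "admissible_seq p" and q: "admissible_seq q"
    and nr: "filter_set F \<in> null_sets (completion (prod_meas (\<lambda>n. min (p n) (q n))))"
  shows "filter_set F \<in> null_sets (completion (prod_meas p)) \<or> filter_set F \<in> null_sets (completion (prod_meas q))"
proof -
  define r where "r n = min (p n) (q n)" for n
  define B where "B = {n. q n < p n}"
  define U where "U x = (\<lambda>n. x n \<or> n \<in> B)" for x :: "nat \<Rightarrow> bool"
  define V where "V x = (\<lambda>n. x n \<or> n \<notin> B)" for x :: "nat \<Rightarrow> bool"
  define F1 where "F1 = {x. U x \<in> filter_set F}"
  define F2 where "F2 = {x. V x \<in> filter_set F}"
  have FS: "x \<in> filter_set F \<longleftrightarrow> x \<in> F1 \<and> x \<in> F2" for x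
  proof
    assume "x \<in> filter_set F"
    then show "x \<in> F1 \<and> x \<in> F2" unfolding F1_def F2_def U_def V_def
      by (auto elim: fs_up)
  next
    assume "x \<in> F1 \<and> x \<in> F2"
    then have "(\<lambda>n. U x n \<and> V x n) \<in> filter_set F" unfolding F1_def F2_def by (auto intro: fs_inter)
    then show "x \<in> filter_set F" by (rule fs_up) (auto simp: U_def V_def)
  qed
  define t1 where "t1 n = (if n \<in> B then r n else 0)" for n
  define \<phi>1 where "\<phi>1 n = (if n \<in> B then (\<lambda>\<alpha> \<beta>. \<beta>) else (\<lambda>\<alpha> \<beta>. \<alpha> \<or> \<beta>))" for n
  define \<phi>2 where "\<phi>2 n = (if n \<notin> B then (\<lambda>\<alpha> \<beta>. \<beta>) else (\<lambda>\<alpha> \<beta>. \<alpha> \<or> \<beta>))" for n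
  have r: "0 \<le> r n" "r n \<le> 1" for n using adm[OF p, of n] adm[OF q, of n] by (auto simp: r_def)
  have fac1: "fac (r n) (t1 n) (r n) (\<phi>1 n)" for n
  proof (cases "n \<in> B")
    case True
    then show ?thesis unfolding \<phi>1_def t1_def using r[of n] by (simp add: fac_snd)
  next
    case False
    then show ?thesis unfolding \<phi>1_def t1_def using r[of n]
      by simp (rule fac_or', auto)
  qed
  have "F1 \<in> null_sets (completion (prod_meas r)) \<or> F2 \<in> null_sets (completion (prod_meas t1))"
  proof (rule splitl[OF fac1])
    show "filter_set F \<in> null_sets (completion (prod_meas r))" using nr by (simp add: r_def[abs_def])
  next
    fix x z assume x: "x \<in> F1" and z: "z \<in> F2"
    have "Phi \<phi>1 (x, z) \<in> F1" using x unfolding F1_def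
      by (auto elim!: fs_up simp: U_def Phi_def \<phi>1_def)
    moreover have "Phi \<phi>1 (x, z) \<in> F2" using z unfolding F2_def
      by (auto elim!: fs_up simp: V_def Phi_def \<phi>1_def)
    ultimately show "Phi \<phi>1 (x, z) \<in> filter_set F" using FS by blast
  qed
  then show ?thesis
  proof
    assume n1: "F1 \<in> null_sets (completion (prod_meas r))"
    define t2 where "t2 n = (if n \<in> B then q n else 0)" for n
    have fac2: "fac (p n) (t2 n) (r n) (\<phi>1 n)" for n
    proof (cases "n \<in> B")
      case True
      then show ?thesis unfolding \<phi>1_def t2_def using adm[OF p, of n] adm[OF q, of n]
        by simp (rule fac_snd', auto simp: r_def B_def)
    next
      case False
      then show ?thesis unfolding \<phi>1_def t2_def using adm[OF p, of n]
        by simp (rule fac_or', auto simp: r_def B_def)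
    qed
    have "F1 \<in> null_sets (completion (prod_meas p))"
    proof (rule xfer[OF fac2 n1])
      fix x z assume "x \<in> F1"
      then show "Phi \<phi>1 (x, z) \<in> F1" unfolding F1_def
        by (auto elim!: fs_up simp: U_def Phi_def \<phi>1_def)
    qed
    then have "filter_set F \<in> null_sets (completion (prod_meas p))"
      by (rule null_sets_completion_subset[rotated]) (use FS in blast)
    then show ?thesis ..
  next
    assume n2: "F2 \<in> null_sets (completion (prod_meas t1))"
    have fac3: "fac (q n) 0 (t1 n) (\<phi>2 n)" for n
    proof (cases "n \<in> B")
      case True
      then show ?thesis unfolding \<phi>2_def t1_def using adm[OF q, of n]
        by simp (rule fac_or', auto simp: r_def B_def)
    next
      case False
      then show ?thesis unfolding \<phi>2_def t1_def using adm[OF q, of n]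
        by simp (rule fac_snd', auto)
    qed
    have "F2 \<in> null_sets (completion (prod_meas q))"
    proof (rule xfer[OF _ n2])
      show "fac (q n) ((\<lambda>_. 0) n) (t1 n) (\<phi>2 n)" for n using fac3 by simp
    next
      fix x z assume "x \<in> F2"
      then show "Phi \<phi>2 (x, z) \<in> F2" unfolding F2_def
        by (auto elim!: fs_up simp: V_def Phi_def \<phi>2_def)
    qed
    then have "filter_set F \<in> null_sets (completion (prod_meas q))"
      by (rule null_sets_completion_subset[rotated]) (use FS in blast)
    then show ?thesis ..
  qed
qed



lemma zero_one:
  assumes T: "T \<in> sets (prod_meas s)"
    and inv: "\<And>x y n. (\<forall>m\<ge>n. x m = y m) \<Longrightarrow> x \<in> T \<Longrightarrow> y \<in> T"
  shows "emeasure (prod_meas s) T = 0 \<or> emeasure (prod_meas s) T = 1"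
proof -
  interpret P: prob_space "prod_meas s" by (rule prob_pm)
  let ?M' = "\<lambda>i. measure_pmf (bernoulli_pmf (s i))"
  define X where "X i = (\<lambda>x::nat\<Rightarrow>bool. x i)" for i
  define A where "A i = sigma_sets (space (prod_meas s)) {X i -` B \<inter> space (prod_meas s) | B. B \<in> sets (?M' i)}" for i
  have rv: "P.random_variable (?M' i) (X i)" for i
    unfolding X_def prod_meas_def by (rule measurable_component_singleton) simp
  have "distr (prod_meas s) (PiM UNIV ?M') (\<lambda>x. \<lambda>i\<in>UNIV. X i x) = PiM UNIV (\<lambda>i. distr (prod_meas s) (?M' i) (X i))"
  proof -
    have "distr (prod_meas s) (PiM UNIV ?M') (\<lambda>x. \<lambda>i\<in>UNIV. X i x) = distr (prod_meas s) (prod_meas s) (\<lambda>x. x)"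
      by (simp add: X_def restrict_UNIV prod_meas_def)
    also have "\<dots> = prod_meas s" by simp
    also have "\<dots> = PiM UNIV (\<lambda>i. distr (prod_meas s) (?M' i) (X i))"
      unfolding prod_meas_def X_def
      by (intro PiM_cong refl distr_PiM_component[symmetric]) (auto intro: prob_space_measure_pmf)
    finally show ?thesis .
  qed
  then have "P.indep_vars ?M' X UNIV"
    by (subst P.indep_vars_iff_distr_eq_PiM) (use rv in auto)
  then have ind: "P.indep_sets A UNIV"
    unfolding P.indep_vars_def A_def by simp
  have sa: "sigma_algebra (space (prod_meas s)) (A i)" for i
    unfolding A_def by (rule sigma_algebra_sigma_sets) auto
  have tail: "T \<in> P.tail_events A"
    unfolding P.tail_events_def
  proof
    fix n
    let ?G = "\<Union> (A ` {n..})"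
    have G: "?G \<subseteq> Pow UNIV" by auto
    define g where "g x = (\<lambda>m. if m < n then False else x m)" for x :: "nat \<Rightarrow> bool"
    have gm: "g \<in> measurable (sigma UNIV ?G) (prod_meas s)"
    proof (rule meas_into)
      fix i
      show "(\<lambda>x. g x i) \<in> measurable (sigma UNIV ?G) (count_space UNIV)"
      proof (cases "i < n")
        case True
        then show ?thesis by (simp add: g_def)
      next
        case False
        have "(\<lambda>x. x i) \<in> measurable (sigma UNIV ?G) (count_space UNIV)"
        proof (rule measurableI)
          fix B :: "bool set"
          have "(\<lambda>x. x i) -` B \<inter> UNIV \<in> A i" unfolding A_def X_def by (auto intro!: sigma_sets.Basic)
          moreover have "A i \<subseteq> ?G" using False by (auto intro!: bexI[of _ i])
          ultimately have "(\<lambda>x. x i) -` B \<inter> UNIV \<in> sigma_sets UNIV ?G" by blast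
          then show "(\<lambda>x. x i) -` B \<inter> space (sigma UNIV ?G) \<in> sets (sigma UNIV ?G)"
            using G by (simp add: sets_measure_of space_measure_of)
        qed (simp)
        then show ?thesis using False by (simp add: g_def)
      qed
    qed
    have "g -` T \<inter> space (sigma UNIV ?G) \<in> sets (sigma UNIV ?G)"
      by (rule measurable_sets[OF gm T])
    moreover have "g -` T \<inter> space (sigma UNIV ?G) = T"
    proof -
      have "g x \<in> T \<longleftrightarrow> x \<in> T" for x
      proof -
        have h: "\<forall>m\<ge>n. x m = g x m" "\<forall>m\<ge>n. g x m = x m" by (simp_all add: g_def)
        show ?thesis using inv[OF h(1)] inv[OF h(2)] by blast
      qed
      then show ?thesis using G by (auto simp: space_measure_of)
    qed
    ultimately show "T \<in> sigma_sets (space (prod_meas s)) ?G"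
      using G by (simp add: sets_measure_of)
  qed
  have "P.prob T = 0 \<or> P.prob T = 1"
    by (rule P.kolmogorov_0_1_law[OF sa ind tail])
  then show ?thesis by (auto simp: P.emeasure_eq_measure)
qed



definition md :: "bool list \<Rightarrow> (nat \<Rightarrow> bool) \<Rightarrow> nat \<Rightarrow> bool" where
  "md xs x = (\<lambda>m. if m < length xs then xs ! m else x m)"

lemma meas_md: "md xs \<in> measurable (prod_meas s) (prod_meas s)"
proof (rule meas_into)
  fix i
  show "(\<lambda>x. md xs x i) \<in> measurable (prod_meas s) (count_space UNIV)"
    by (cases "i < length xs") (simp_all add: md_def)
qed

lemma fac_not': "b = 1 - a \<Longrightarrow> 0 \<le> a \<Longrightarrow> a \<le> 1 \<Longrightarrow> 0 \<le> t \<Longrightarrow> t \<le> 1 \<Longrightarrow> fac a t b (\<lambda>\<alpha> \<beta>. \<not> \<alpha>)"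
  using fac_not by simp

lemma zero_one_filter:
  assumes proper: "F \<noteq> bot" and nonprincipal: "F \<le> cofinite"
    and r: "admissible_seq r"
    and FS: "filter_set F \<in> sets (completion (prod_meas r))"
  shows "filter_set F \<in> null_sets (completion (prod_meas r))"
proof -
  let ?FS = "filter_set F"
  let ?\<mu> = "prod_meas r"
  interpret P: prob_space ?\<mu> by (rule prob_pm)
  define F1 where "F1 = main_part ?\<mu> ?FS"
  have F1: "F1 \<in> sets ?\<mu>" "F1 \<subseteq> ?FS" using FS unfolding F1_def
    by (auto dest: main_part_null_part_Un)
  have eF1: "emeasure (completion ?\<mu>) ?FS = emeasure ?\<mu> F1"
    using FS by (simp add: F1_def)
  define T where "T = (\<Union>xs. md xs -` F1)"
  have Tm: "T \<in> sets ?\<mu>"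
  proof -
    have "md xs -` F1 \<in> sets ?\<mu>" for xs
      using measurable_sets[OF meas_md F1(1)] by simp
    then show ?thesis unfolding T_def by (intro sets.countable_UN'') auto
  qed
  have F1T: "F1 \<subseteq> T" unfolding T_def
  proof
    fix x assume "x \<in> F1"
    moreover have "md [] x = x" by (simp add: md_def)
    ultimately show "x \<in> (\<Union>xs. md xs -` F1)" by (intro UN_I[of "[]"]) auto
  qed
  have TF: "T \<subseteq> ?FS"
  proof
    fix x assume "x \<in> T"
    then obtain xs where xs: "md xs x \<in> F1" unfolding T_def by auto
    have "(\<lambda>m. \<not> m < length xs) \<in> ?FS"
      by (rule fs_cof[OF nonprincipal]) simp
    then have "(\<lambda>m. md xs x m \<and> \<not> m < length xs) \<in> ?FS"
      using F1(2) xs by (intro fs_inter) auto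
    then show "x \<in> ?FS" by (rule fs_up) (auto simp: md_def)
  qed
  have inv: "y \<in> T" if "\<forall>m\<ge>n. x m = y m" "x \<in> T" for x y n
  proof -
    from that(2) obtain xs where xs: "md xs x \<in> F1" unfolding T_def by auto
    define k where "k = max (length xs) n"
    define ys where "ys = map (md xs x) [0..<k]"
    have "md ys y = md xs x"
    proof
      fix m
      show "md ys y m = md xs x m"
      proof (cases "m < k")
        case True
        then show ?thesis by (simp add: md_def ys_def)
      next
        case False
        then have "\<not> m < length xs" "n \<le> m" by (auto simp: k_def)
        then show ?thesis using that(1) False by (simp add: md_def ys_def)
      qed
    qed
    with xs show "y \<in> T" unfolding T_def by (intro UN_I[of ys]) auto
  qed
  have eT: "emeasure ?\<mu> T = emeasure (completion ?\<mu>) ?FS"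
  proof (rule antisym)
    have "emeasure ?\<mu> T = emeasure (completion ?\<mu>) T" using Tm by simp
    also have "\<dots> \<le> emeasure (completion ?\<mu>) ?FS" using TF FS by (intro emeasure_mono) auto
    finally show "emeasure ?\<mu> T \<le> emeasure (completion ?\<mu>) ?FS" .
    show "emeasure (completion ?\<mu>) ?FS \<le> emeasure ?\<mu> T"
      unfolding eF1 using F1T Tm by (intro emeasure_mono) auto
  qed
  have "emeasure ?\<mu> T = 0 \<or> emeasure ?\<mu> T = 1"
    by (rule zero_one[OF Tm inv])
  then show ?thesis
  proof
    assume "emeasure ?\<mu> T = 0"
    then show ?thesis using FS eT by (simp add: null_sets_def)
  next
    assume "emeasure ?\<mu> T = 1"
    then have e1: "emeasure (completion ?\<mu>) ?FS = 1" using eT by simp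
    define C where "C = UNIV - ?FS"
    have U: "UNIV \<in> sets (completion ?\<mu>)" using sets.top[of "completion ?\<mu>"] by simp
    have "emeasure (completion ?\<mu>) C = emeasure (completion ?\<mu>) UNIV - emeasure (completion ?\<mu>) ?FS"
      unfolding C_def
      by (rule emeasure_Diff) (use FS U in \<open>auto simp: P.emeasure_space_1[simplified]\<close>)
    also have "\<dots> = 0"
    proof -
      have "UNIV \<in> sets ?\<mu>" using sets.top[of ?\<mu>] by simp
      then have "emeasure (completion ?\<mu>) UNIV = 1" using P.emeasure_space_1 by simp
      then show ?thesis using e1 by simp
    qed
    finally have Cn: "C \<in> null_sets (completion ?\<mu>)"
      using FS U unfolding C_def by (auto simp: null_sets_def)
    define H where "H = {x. (\<lambda>n. \<not> x n) \<notin> ?FS}"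
    have H1: "H \<in> null_sets (completion (prod_meas (\<lambda>n. 1 - r n)))"
    proof (rule xfer2[OF _ Cn])
      show "fac (1 - r n) ((\<lambda>_. 0) n) (r n) ((\<lambda>_ \<alpha> \<beta>. \<not> \<alpha>) n)" for n
        using adm[OF r, of n] by (intro fac_not') auto
    next
      fix x z assume "x \<in> H"
      then show "Phi (\<lambda>_ \<alpha> \<beta>. \<not> \<alpha>) (x, z) \<in> C" by (simp add: H_def C_def Phi_def)
    qed
    define t where "t n = (1 - 2 * r n) / (1 - r n)" for n
    have H2: "H \<in> null_sets (completion ?\<mu>)"
    proof (rule xfer[OF _ H1])
      show "fac (r n) (t n) (1 - r n) ((\<lambda>_ \<alpha> \<beta>. \<alpha> \<or> \<beta>) n)" for n
      proof -
        have p1: "0 < 1 - r n" "1 - 2 * r n \<ge> 0" using adm[OF r, of n] by linarith+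
        have t0: "0 \<le> t n" using p1 by (simp add: t_def)
        have t1: "t n \<le> 1" using p1 adm[OF r, of n] by (simp add: t_def divide_le_eq_1)
        have m: "t n * (1 - r n) = 1 - 2 * r n" using p1 by (simp add: t_def)
        then have m2: "t n - r n * t n = 1 - 2 * r n" by (simp add: algebra_simps)
        have eq: "1 - r n = r n + t n - r n * t n" using m2 by linarith
        show ?thesis by (rule fac_or'[OF eq]) (use adm[OF r, of n] t0 t1 in auto)
      qed
    next
      fix x z assume x: "x \<in> H"
      show "Phi (\<lambda>_ \<alpha> \<beta>. \<alpha> \<or> \<beta>) (x, z) \<in> H"
      proof -
        have "(\<lambda>n. \<not> (x n \<or> z n)) \<notin> ?FS"
        proof
          assume "(\<lambda>n. \<not> (x n \<or> z n)) \<in> ?FS"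
          then have "(\<lambda>n. \<not> x n) \<in> ?FS" by (rule fs_up) auto
          with x show False by (simp add: H_def)
        qed
        then show ?thesis by (simp add: H_def Phi_def)
      qed
    qed
    have "?FS \<subseteq> H"
    proof
      fix x assume x: "x \<in> ?FS"
      show "x \<in> H"
      proof (rule ccontr)
        assume "x \<notin> H"
        then have "(\<lambda>n. \<not> x n) \<in> ?FS" by (simp add: H_def)
        with x have "(\<lambda>n. x n \<and> \<not> x n) \<in> ?FS" by (rule fs_inter)
        then have "eventually (\<lambda>n. False) F" by (simp add: filter_set_def)
        with proper show False by (simp add: eventually_False)
      qed
    qed
    then show ?thesis using H2 by (rule null_sets_completion_subset)
  qed
qed


theorem theorem1p3:
  fixes F :: "nat filter" and p q :: "nat \<Rightarrow> real"
  assumes proper: "F \<noteq> bot"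
    and nonprincipal: "F \<le> cofinite"
    and p: "admissible_seq p" and q: "admissible_seq q"
  shows "((\<forall>\<^sub>F n in cofinite. p n \<le> q n)
            \<and> filter_set F \<in> null_sets (completion (prod_meas q))
          \<longrightarrow> filter_set F \<in> null_sets (completion (prod_meas p)))
       \<and> (filter_set F \<notin> sets (completion (prod_meas p))
            \<and> filter_set F \<notin> sets (completion (prod_meas q))
          \<longrightarrow> filter_set F \<notin> sets (completion (prod_meas (\<lambda>n. min (p n) (q n)))))"
proof (intro conjI impI)
  assume "(\<forall>\<^sub>F n in cofinite. p n \<le> q n) \<and> filter_set F \<in> null_sets (completion (prod_meas q))"
  then show "filter_set F \<in> null_sets (completion (prod_meas p))"
    using part1[OF nonprincipal p q] by blast
next
  assume h: "filter_set F \<notin> sets (completion (prod_meas p)) \<and> filter_set F \<notin> sets (completion (prod_meas q))"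
  show "filter_set F \<notin> sets (completion (prod_meas (\<lambda>n. min (p n) (q n))))"
  proof
    assume m: "filter_set F \<in> sets (completion (prod_meas (\<lambda>n. min (p n) (q n))))"
    have r: "admissible_seq (\<lambda>n. min (p n) (q n))"
      using p q by (auto simp: admissible_seq_def min_def)
    have "filter_set F \<in> null_sets (completion (prod_meas (\<lambda>n. min (p n) (q n))))"
      by (rule zero_one_filter[OF proper nonprincipal r m])
    then have "filter_set F \<in> null_sets (completion (prod_meas p)) \<or> filter_set F \<in> null_sets (completion (prod_meas q))"
      by (rule part2[OF p q])
    then show False using h by (auto simp: null_sets_def)
  qed
qed

end
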